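(* Let $R$ be a finitely generated integral $\mathbb{K}$-algebra with an effective, pointed grading by a finitely generated abelian group $K$, let $(\pi,\mathrm{id}_K)\colon S=\mathbb{K}[T_1,\dots,T_r]\to R$ be a minimal presentation and $I:=\ker(\pi)$. Then every graded automorphism $(\varphi,\psi)\in\operatorname{Aut}_K(R)$ satisfies $\psi(\Omega_I)=\Omega_I$.
   Context: $\mathbb{K}$ is algebraically closed of characteristic zero. $\operatorname{Aut}_K(R)$ is the group of graded automorphisms $(\varphi,\psi)$ of $R$ ($\varphi$ algebra automorphism, $\psi\in\operatorname{Aut}(K)$, $\varphi(R_w)=R_{\psi(w)}$). Effective: the weight monoid $\omega(R)=\{w;\ R_w\ne0\}$ generates $K$; pointed: $R_0=\mathbb{K}$ and the cone in $K\otimes\mathbb{Q}$ generated by $\omega(R)$ contains no line. Minimal presentation: $K$-graded polynomial ring $S$ with homogeneous variables and graded epimorphism $(\pi,\kappa)\colon S\to R$ with $\kappa$ a group isomorphism and $\ker\pi\subseteq\langle T_1,\dots,T_r\rangle^2$. On $K$ one has the partial order $w'\le w$ iff $w-w'\in\omega(S)$ (weight monoid of $S$). For the homogeneous ideal $I$, let $I_{<w}\subseteq S$ be the ideal generated by all components $I_{w'}=I\cap S_{w'}$ with $w'<w$; the set of ideal generator degrees is $\Omega_I:=\{w\in K;\ I_w\not\subseteq I_{<w}\}$. *)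

theory Defs
  imports "HOL-Library.Poly_Mapping" "HOL-Computational_Algebra.Polynomial"
begin

definition alg_closed_field :: "'k::field itself \<Rightarrow> bool" where
  "alg_closed_field _ \<longleftrightarrow> (\<forall>p::'k poly. degree p > 0 \<longrightarrow> (\<exists>x. poly p x = 0))"

definition nmult :: "nat \<Rightarrow> 'g::ab_group_add \<Rightarrow> 'g" where
  "nmult n w = sum_list (replicate n w)"

inductive_set gen_subgroup :: "'g::ab_group_add set \<Rightarrow> 'g set" for G where
  gs_zero: "0 \<in> gen_subgroup G"
| gs_gen: "g \<in> G \<Longrightarrow> g \<in> gen_subgroup G"
| gs_add: "a \<in> gen_subgroup G \<Longrightarrow> b \<in> gen_subgroup G \<Longrightarrow> a + b \<in> gen_subgroup G"
| gs_neg: "a \<in> gen_subgroup G \<Longrightarrow> - a \<in> gen_subgroup G"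

definition fin_gen_group :: "'g::ab_group_add itself \<Rightarrow> bool" where
  "fin_gen_group _ \<longleftrightarrow> (\<exists>G::'g set. finite G \<and> gen_subgroup G = UNIV)"

definition torsion_elem :: "'g::ab_group_add \<Rightarrow> bool" where
  "torsion_elem w \<longleftrightarrow> (\<exists>n>0. nmult n w = 0)"

text \<open>The convex cone in K \<otimes> Q generated by M contains no line.  Unfolded:
  a nonnegative rational relation among the images 1 \<otimes> w (w \<in> M) vanishing in K \<otimes> Q
  must be trivial; after clearing denominators (and since 1 \<otimes> x = 0 iff x is torsion)
  this says: whenever a finite sum of elements of M (with repetitions) is torsion,
  every summand is torsion.\<close>
definition cone_pointed :: "'g::ab_group_add set \<Rightarrow> bool" where
  "cone_pointed M \<longleftrightarrow>
     (\<forall>ws. set ws \<subseteq> M \<longrightarrow> torsion_elem (sum_list ws) \<longrightarrow> (\<forall>w\<in>set ws. torsion_elem w))"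

inductive_set ideal_gen :: "'a::comm_ring_1 set \<Rightarrow> 'a set" for G where
  ig_zero: "0 \<in> ideal_gen G"
| ig_step: "g \<in> G \<Longrightarrow> y \<in> ideal_gen G \<Longrightarrow> a * g + y \<in> ideal_gen G"

definition ring_hom_fun :: "('a::comm_ring_1 \<Rightarrow> 'b::comm_ring_1) \<Rightarrow> bool" where
  "ring_hom_fun f \<longleftrightarrow> f 1 = 1 \<and> (\<forall>x y. f (x + y) = f x + f y) \<and> (\<forall>x y. f (x * y) = f x * f y)"

inductive_set subalg_gen :: "('k \<Rightarrow> 'r::comm_ring_1) \<Rightarrow> 'r set \<Rightarrow> 'r set" for alg G where
  sa_scalar: "alg c \<in> subalg_gen alg G"
| sa_gen: "g \<in> G \<Longrightarrow> g \<in> subalg_gen alg G"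
| sa_add: "a \<in> subalg_gen alg G \<Longrightarrow> b \<in> subalg_gen alg G \<Longrightarrow> a + b \<in> subalg_gen alg G"
| sa_mult: "a \<in> subalg_gen alg G \<Longrightarrow> b \<in> subalg_gen alg G \<Longrightarrow> a * b \<in> subalg_gen alg G"

definition fin_gen_algebra :: "('k \<Rightarrow> 'r::comm_ring_1) \<Rightarrow> bool" where
  "fin_gen_algebra alg \<longleftrightarrow> (\<exists>G. finite G \<and> subalg_gen alg G = UNIV)"

definition is_grading :: "('k \<Rightarrow> 'r::comm_ring_1) \<Rightarrow> ('g::ab_group_add \<Rightarrow> 'r set) \<Rightarrow> bool" where
  "is_grading alg Rw \<longleftrightarrow>
     (\<forall>w. 0 \<in> Rw w \<and> (\<forall>x\<in>Rw w. \<forall>y\<in>Rw w. x + y \<in> Rw w) \<and> (\<forall>c. \<forall>x\<in>Rw w. alg c * x \<in> Rw w)) \<and>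
     (\<forall>w w'. \<forall>x\<in>Rw w. \<forall>y\<in>Rw w'. x * y \<in> Rw (w + w')) \<and>
     (\<forall>x. \<exists>!c::'g \<Rightarrow> 'r. finite {w. c w \<noteq> 0} \<and> (\<forall>w. c w \<in> Rw w) \<and> x = (\<Sum>w\<in>{w. c w \<noteq> 0}. c w))"

definition weight_monoid :: "('g \<Rightarrow> 'r::zero set) \<Rightarrow> 'g set" where
  "weight_monoid Rw = {w. Rw w \<noteq> {0}}"

definition effective_grading :: "('g::ab_group_add \<Rightarrow> 'r::zero set) \<Rightarrow> bool" where
  "effective_grading Rw \<longleftrightarrow> gen_subgroup (weight_monoid Rw) = UNIV"

definition pointed_grading :: "('k \<Rightarrow> 'r::comm_ring_1) \<Rightarrow> ('g::ab_group_add \<Rightarrow> 'r set) \<Rightarrow> bool" where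
  "pointed_grading alg Rw \<longleftrightarrow> Rw 0 = range alg \<and> cone_pointed (weight_monoid Rw)"

definition graded_aut ::
  "('k \<Rightarrow> 'r::comm_ring_1) \<Rightarrow> ('g::ab_group_add \<Rightarrow> 'r set) \<Rightarrow> ('r \<Rightarrow> 'r) \<Rightarrow> ('g \<Rightarrow> 'g) \<Rightarrow> bool" where
  "graded_aut alg Rw \<phi> \<psi> \<longleftrightarrow>
     bij \<phi> \<and> ring_hom_fun \<phi> \<and> (\<forall>c. \<phi> (alg c) = alg c) \<and>
     bij \<psi> \<and> (\<forall>a b. \<psi> (a + b) = \<psi> a + \<psi> b) \<and>
     (\<forall>w. \<phi> ` Rw w = Rw (\<psi> w))"

type_synonym ('v, 'k) mpoly = "('v \<Rightarrow>\<^sub>0 nat) \<Rightarrow>\<^sub>0 'k"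

definition const_poly :: "'k::comm_ring_1 \<Rightarrow> ('v, 'k) mpoly" where
  "const_poly c = Poly_Mapping.single 0 c"

definition var_poly :: "'v \<Rightarrow> ('v, 'k::comm_ring_1) mpoly" where
  "var_poly v = Poly_Mapping.single (Poly_Mapping.single v 1) 1"

definition mon_deg :: "('v \<Rightarrow> 'g::ab_group_add) \<Rightarrow> ('v \<Rightarrow>\<^sub>0 nat) \<Rightarrow> 'g" where
  "mon_deg deg m = (\<Sum>v\<in>Poly_Mapping.keys m. nmult (Poly_Mapping.lookup m v) (deg v))"

definition S_comp :: "('v \<Rightarrow> 'g::ab_group_add) \<Rightarrow> 'g \<Rightarrow> ('v, 'k::comm_ring_1) mpoly set" where
  "S_comp deg w = {f. \<forall>m\<in>Poly_Mapping.keys f. mon_deg deg m = w}"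

definition deg_le :: "('v \<Rightarrow> 'g::ab_group_add) \<Rightarrow> 'k::comm_ring_1 itself \<Rightarrow> 'g \<Rightarrow> 'g \<Rightarrow> bool" where
  "deg_le deg _ w' w \<longleftrightarrow> w - w' \<in> weight_monoid (S_comp deg :: 'g \<Rightarrow> ('v, 'k) mpoly set)"

definition deg_less :: "('v \<Rightarrow> 'g::ab_group_add) \<Rightarrow> 'k::comm_ring_1 itself \<Rightarrow> 'g \<Rightarrow> 'g \<Rightarrow> bool" where
  "deg_less deg k w' w \<longleftrightarrow> deg_le deg k w' w \<and> w' \<noteq> w"

definition ideal_below :: "('v \<Rightarrow> 'g::ab_group_add) \<Rightarrow> ('v, 'k::comm_ring_1) mpoly set \<Rightarrow> 'g \<Rightarrow> ('v, 'k) mpoly set" where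
  "ideal_below deg I w = ideal_gen (\<Union>w'\<in>{w'. deg_less deg TYPE('k) w' w}. I \<inter> S_comp deg w')"

definition gen_degrees :: "('v \<Rightarrow> 'g::ab_group_add) \<Rightarrow> ('v, 'k::comm_ring_1) mpoly set \<Rightarrow> 'g set" where
  "gen_degrees deg I = {w. \<not> (I \<inter> S_comp deg w \<subseteq> ideal_below deg I w)}"

definition minimal_presentation ::
  "('k::field \<Rightarrow> 'r::comm_ring_1) \<Rightarrow> ('g::ab_group_add \<Rightarrow> 'r set) \<Rightarrow> ('v \<Rightarrow> 'g)
     \<Rightarrow> (('v, 'k) mpoly \<Rightarrow> 'r) \<Rightarrow> bool" where
  "minimal_presentation alg Rw deg \<pi> \<longleftrightarrow>
     ring_hom_fun \<pi> \<and> (\<forall>c. \<pi> (const_poly c) = alg c) \<and> surj \<pi> \<and>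
     (\<forall>w. \<pi> ` S_comp deg w \<subseteq> Rw w) \<and>
     {f. \<pi> f = 0} \<subseteq> ideal_gen {var_poly u * var_poly v | u v. True}"

end

theory Submission imports Defs begin

lemma nmult_0 [simp]: "nmult 0 w = 0" by (simp add: nmult_def)
lemma nmult_Suc: "nmult (Suc n) w = w + nmult n w" by (simp add: nmult_def)
lemma nmult_add: "nmult (a + b) w = nmult a w + nmult b w"
  by (simp add: nmult_def replicate_add)
lemma nmult_1 [simp]: "nmult 1 w = w" by (simp add: nmult_def)
lemma nmult_Suc0 [simp]: "nmult (Suc 0) w = w" by (simp add: nmult_def)
lemma nmult_zero_right [simp]: "nmult n (0::'g::ab_group_add) = 0"
  by (induct n) (simp_all add: nmult_Suc)

lemma additive_0: "(\<forall>a b. \<psi> (a + b) = \<psi> a + \<psi> b) \<Longrightarrow> \<psi> (0::'g::ab_group_add) = (0::'h::ab_group_add)"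
  by (metis add_cancel_right_right)
lemma additive_minus: "(\<forall>a b. \<psi> (a + b) = \<psi> a + \<psi> b) \<Longrightarrow> \<psi> ((a::'g::ab_group_add) - b) = \<psi> a - (\<psi> b::'h::ab_group_add)"
  by (metis add_diff_cancel diff_add_cancel eq_diff_eq)
lemma additive_nmult: "(\<forall>a b. \<psi> (a + b) = \<psi> a + \<psi> b) \<Longrightarrow> \<psi> (nmult n (w::'g::ab_group_add)) = nmult n (\<psi> w::'h::ab_group_add)"
  by (induct n) (simp_all add: nmult_Suc additive_0)
lemma additive_sum: "(\<forall>a b. \<psi> (a + b) = \<psi> a + \<psi> b) \<Longrightarrow> \<psi> (\<Sum>x\<in>A. (f x::'g::ab_group_add)) = (\<Sum>x\<in>A. (\<psi> (f x)::'h::ab_group_add))"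
  by (induct A rule: infinite_finite_induct) (simp_all add: additive_0)

lemma mon_deg_UNIV:
  "mon_deg deg (m::'v::finite \<Rightarrow>\<^sub>0 nat) = (\<Sum>v\<in>UNIV. nmult (Poly_Mapping.lookup m v) (deg v))"
  unfolding mon_deg_def
  by (rule sum.mono_neutral_left) (auto simp: in_keys_iff)

lemma mon_deg_add: "mon_deg deg ((a::'v::finite \<Rightarrow>\<^sub>0 nat) + b) = mon_deg deg a + mon_deg deg b"
  by (simp add: mon_deg_UNIV lookup_add nmult_add sum.distrib)

lemma mon_deg_zero [simp]: "mon_deg deg 0 = 0"
  by (simp add: mon_deg_def)

lemma mon_deg_single: "mon_deg deg (Poly_Mapping.single (v::'v::finite) k) = nmult k (deg v)"
proof -
  have "mon_deg deg (Poly_Mapping.single v k) = (\<Sum>u\<in>UNIV. if u = v then nmult k (deg v) else 0)"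
    unfolding mon_deg_UNIV by (rule sum.cong) (auto simp: lookup_single)
  then show ?thesis by simp
qed

lemma pm_expand: "p = (\<Sum>m\<in>Poly_Mapping.keys p. Poly_Mapping.single m (Poly_Mapping.lookup p m))"
proof (rule poly_mapping_eqI)
  fix k
  have "(\<Sum>m\<in>Poly_Mapping.keys p. Poly_Mapping.lookup (Poly_Mapping.single m (Poly_Mapping.lookup p m)) k)
      = (\<Sum>m\<in>Poly_Mapping.keys p. if m = k then Poly_Mapping.lookup p k else 0)"
    by (rule sum.cong) (auto simp: lookup_single)
  also have "\<dots> = Poly_Mapping.lookup p k" by (auto simp: in_keys_iff)
  finally show "Poly_Mapping.lookup p k = Poly_Mapping.lookup (\<Sum>m\<in>Poly_Mapping.keys p. Poly_Mapping.single m (Poly_Mapping.lookup p m)) k"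
    by (simp add: lookup_sum)
qed

lemma pm_expand_superset:
  assumes "finite A" "Poly_Mapping.keys p \<subseteq> A"
  shows "p = (\<Sum>m\<in>A. Poly_Mapping.single m (Poly_Mapping.lookup p m))"
proof -
  have "(\<Sum>m\<in>A. Poly_Mapping.single m (Poly_Mapping.lookup p m)) = (\<Sum>m\<in>Poly_Mapping.keys p. Poly_Mapping.single m (Poly_Mapping.lookup p m))"
    by (rule sum.mono_neutral_right) (use assms in \<open>auto simp: in_keys_iff\<close>)
  then show ?thesis using pm_expand by metis
qed

lemma mon_expand: "(m::'v::finite \<Rightarrow>\<^sub>0 nat) = (\<Sum>v\<in>UNIV. Poly_Mapping.single v (Poly_Mapping.lookup m v))"
  by (rule pm_expand_superset) auto

lemma var_pow: "(var_poly v :: ('v,'k::comm_ring_1) mpoly) ^ k = Poly_Mapping.single (Poly_Mapping.single v k) 1"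
  by (induct k) (simp_all add: var_poly_def mult_single single_add[symmetric] add.commute)

lemma single_prod: "finite A \<Longrightarrow> (\<Prod>v\<in>A. Poly_Mapping.single (g v) (1::'k::comm_ring_1)) = Poly_Mapping.single (\<Sum>v\<in>A. g v) 1"
  by (induct A rule: finite_induct) (simp_all add: mult_single)

lemma single_as: "Poly_Mapping.single (m::'v::finite \<Rightarrow>\<^sub>0 nat) (c::'k::comm_ring_1)
   = const_poly c * (\<Prod>v\<in>UNIV. var_poly v ^ Poly_Mapping.lookup m v)"
proof -
  have "(\<Prod>v\<in>UNIV. (var_poly v :: ('v,'k) mpoly) ^ Poly_Mapping.lookup m v) = Poly_Mapping.single m 1"
    by (simp add: var_pow single_prod mon_expand[symmetric])
  then show ?thesis by (simp add: const_poly_def mult_single)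
qed


lemma rh_0: "ring_hom_fun h \<Longrightarrow> h 0 = 0"
proof -
  assume "ring_hom_fun h"
  then have "h (0 + 0) = h 0 + h 0" unfolding ring_hom_fun_def by blast
  then show ?thesis by simp
qed
lemma rh_add: "ring_hom_fun h \<Longrightarrow> h (x + y) = h x + h y"
  unfolding ring_hom_fun_def by blast
lemma rh_mult: "ring_hom_fun h \<Longrightarrow> h (x * y) = h x * h y"
  unfolding ring_hom_fun_def by blast
lemma rh_1: "ring_hom_fun h \<Longrightarrow> h 1 = 1"
  unfolding ring_hom_fun_def by blast
lemma rh_minus: "ring_hom_fun h \<Longrightarrow> h (x - y) = h x - h y"
proof -
  assume "ring_hom_fun h"
  then have "h ((x - y) + y) = h (x - y) + h y" by (rule rh_add)
  then show ?thesis by (simp add: eq_diff_eq)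
qed
lemma rh_sum: "ring_hom_fun h \<Longrightarrow> h (\<Sum>x\<in>A. f x) = (\<Sum>x\<in>A. h (f x))"
  by (induct A rule: infinite_finite_induct) (simp_all add: rh_0 rh_add)
lemma rh_prod: "ring_hom_fun h \<Longrightarrow> h (\<Prod>x\<in>A. f x) = (\<Prod>x\<in>A. h (f x))"
  by (induct A rule: infinite_finite_induct) (simp_all add: rh_1 rh_mult)
lemma rh_pow: "ring_hom_fun h \<Longrightarrow> h (x ^ n) = h x ^ n"
  by (induct n) (simp_all add: rh_1 rh_mult)
lemma rh_comp: "ring_hom_fun h \<Longrightarrow> ring_hom_fun g \<Longrightarrow> ring_hom_fun (h \<circ> g)"
  unfolding ring_hom_fun_def by simp

lemma rh_agree:
  fixes h1 h2 :: "('v::finite, 'k::comm_ring_1) mpoly \<Rightarrow> 'r::comm_ring_1"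
  assumes "ring_hom_fun h1" "ring_hom_fun h2"
    and "\<And>c. h1 (const_poly c) = h2 (const_poly c)"
    and "\<And>v. h1 (var_poly v) = h2 (var_poly v)"
  shows "h1 p = h2 p"
proof -
  have "h1 (Poly_Mapping.single m c) = h2 (Poly_Mapping.single m c)" for m c
    by (simp add: single_as rh_mult[OF assms(1)] rh_mult[OF assms(2)] rh_prod[OF assms(1)]
        rh_prod[OF assms(2)] rh_pow[OF assms(1)] rh_pow[OF assms(2)] assms(3,4))
  then show ?thesis
    by (subst (1 2) pm_expand) (simp add: rh_sum[OF assms(1)] rh_sum[OF assms(2)])
qed

lemma S_zero [simp]: "0 \<in> S_comp deg w" by (simp add: S_comp_def)
lemma S_add: "p \<in> S_comp deg w \<Longrightarrow> q \<in> S_comp deg w \<Longrightarrow> p + q \<in> S_comp deg w"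
  unfolding S_comp_def using keys_add[of p q] by auto
lemma S_uminus: "p \<in> S_comp deg w \<Longrightarrow> - p \<in> S_comp deg w"
  unfolding S_comp_def by simp
lemma S_diff: "p \<in> S_comp deg w \<Longrightarrow> q \<in> S_comp deg w \<Longrightarrow> p - q \<in> S_comp deg w"
  unfolding S_comp_def using keys_diff[of p q] by auto
lemma S_sum: "(\<And>x. x \<in> A \<Longrightarrow> f x \<in> S_comp deg w) \<Longrightarrow> (\<Sum>x\<in>A. f x) \<in> S_comp deg w"
  by (induct A rule: infinite_finite_induct) (simp_all add: S_add)
lemma S_mult:
  fixes deg :: "'v::finite \<Rightarrow> 'g::ab_group_add"
  assumes "p \<in> S_comp deg w" "q \<in> S_comp deg w'"
  shows "(p::('v,'k::comm_ring_1) mpoly) * q \<in> S_comp deg (w + w')"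
  unfolding S_comp_def mem_Collect_eq
proof (intro ballI)
  fix m assume "m \<in> Poly_Mapping.keys (p * q)"
  then obtain a b where "m = a + b" "a \<in> Poly_Mapping.keys p" "b \<in> Poly_Mapping.keys q"
    using keys_mult by blast
  then show "mon_deg deg m = w + w'" using assms by (simp add: S_comp_def mon_deg_add)
qed
lemma S_one: "(1::('v::finite,'k::comm_ring_1) mpoly) \<in> S_comp deg 0"
  by (simp add: S_comp_def)
lemma S_pow:
  fixes deg :: "'v::finite \<Rightarrow> 'g::ab_group_add"
  shows "(p::('v,'k::comm_ring_1) mpoly) \<in> S_comp deg w \<Longrightarrow> p ^ n \<in> S_comp deg (nmult n w)"
  by (induct n) (simp_all add: S_one nmult_Suc S_mult)
lemma S_prod:
  fixes deg :: "'v::finite \<Rightarrow> 'g::ab_group_add"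
  shows "finite A \<Longrightarrow> (\<And>x. x \<in> A \<Longrightarrow> (f x::('v,'k::comm_ring_1) mpoly) \<in> S_comp deg (g x)) \<Longrightarrow> (\<Prod>x\<in>A. f x) \<in> S_comp deg (\<Sum>x\<in>A. g x)"
  by (induct A rule: finite_induct) (simp_all add: S_one S_mult)
lemma const_S0: "(const_poly c :: ('v::finite,'k::comm_ring_1) mpoly) \<in> S_comp deg 0"
  by (simp add: S_comp_def const_poly_def)
lemma var_S: "(var_poly v :: ('v::finite,'k::comm_ring_1) mpoly) \<in> S_comp deg (deg v)"
  by (simp add: S_comp_def var_poly_def mon_deg_single)
lemma single_S: "Poly_Mapping.single m c \<in> S_comp deg (mon_deg deg m)"
  by (simp add: S_comp_def)

lemma ideal_add: "x \<in> ideal_gen G \<Longrightarrow> y \<in> ideal_gen G \<Longrightarrow> x + y \<in> ideal_gen G"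
proof (induct x rule: ideal_gen.induct)
  case ig_zero then show ?case by simp
next
  case (ig_step g z a)
  have "a * g + (z + y) \<in> ideal_gen G"
    by (rule ideal_gen.ig_step) (use ig_step in auto)
  then show ?case by (simp add: add.assoc)
qed
lemma ideal_mult: "x \<in> ideal_gen G \<Longrightarrow> b * x \<in> ideal_gen G"
proof (induct x rule: ideal_gen.induct)
  case ig_zero then show ?case by (simp add: ideal_gen.ig_zero)
next
  case (ig_step g z a)
  have "b * (a * g + z) = (b * a) * g + b * z" by (simp add: algebra_simps)
  moreover have "(b * a) * g + b * z \<in> ideal_gen G"
    by (rule ideal_gen.ig_step) (use ig_step in auto)
  ultimately show ?case by simp
qed
lemma ideal_gen_in: "g \<in> G \<Longrightarrow> g \<in> ideal_gen G"
  using ideal_gen.ig_step[of g G 0 1] by (simp add: ideal_gen.ig_zero)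
lemma ideal_uminus: "x \<in> ideal_gen G \<Longrightarrow> - x \<in> ideal_gen G"
  using ideal_mult[of x G "-1"] by simp
lemma ideal_diff: "x \<in> ideal_gen G \<Longrightarrow> y \<in> ideal_gen G \<Longrightarrow> x - y \<in> ideal_gen G"
  using ideal_add ideal_uminus by (metis diff_conv_add_uminus)
lemma ideal_zero: "0 \<in> ideal_gen G" by (rule ideal_gen.ig_zero)


section \<open>Substitution homomorphism\<close>

lemma const_add: "const_poly (a + b) = const_poly a + const_poly b"
  by (simp add: const_poly_def single_add)
lemma const_mult: "const_poly (a * b) = const_poly a * const_poly b"
  by (simp add: const_poly_def mult_single)
lemma const_0 [simp]: "const_poly 0 = 0" by (simp add: const_poly_def)
lemma const_1 [simp]: "const_poly 1 = 1" by (simp add: const_poly_def)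

definition monF :: "('v::finite \<Rightarrow> ('v,'k::comm_ring_1) mpoly) \<Rightarrow> ('v \<Rightarrow>\<^sub>0 nat) \<Rightarrow> ('v,'k) mpoly" where
  "monF F m = (\<Prod>v\<in>UNIV. F v ^ Poly_Mapping.lookup m v)"

definition evm :: "('v::finite \<Rightarrow> ('v,'k::comm_ring_1) mpoly) \<Rightarrow> ('v,'k) mpoly \<Rightarrow> ('v,'k) mpoly" where
  "evm F p = (\<Sum>m\<in>Poly_Mapping.keys p. const_poly (Poly_Mapping.lookup p m) * monF F m)"

lemma monF_add: "monF F (a + b) = monF F a * monF F b"
  by (simp add: monF_def lookup_add power_add prod.distrib)
lemma monF_0 [simp]: "monF F 0 = 1" by (simp add: monF_def)
lemma monF_single: "monF F (Poly_Mapping.single v 1) = F v"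
proof -
  have "monF F (Poly_Mapping.single v 1) = (\<Prod>u\<in>UNIV. if u = v then F v else 1)"
    unfolding monF_def by (rule prod.cong) (auto simp: lookup_single)
  then show ?thesis by simp
qed

lemma evm_superset:
  assumes "finite A" "Poly_Mapping.keys p \<subseteq> A"
  shows "evm F p = (\<Sum>m\<in>A. const_poly (Poly_Mapping.lookup p m) * monF F m)"
  unfolding evm_def
  by (rule sum.mono_neutral_left) (use assms in \<open>auto simp: in_keys_iff\<close>)

lemma evm_add: "evm F (p + q) = evm F p + evm F q"
proof -
  let ?A = "Poly_Mapping.keys p \<union> Poly_Mapping.keys q"
  have "evm F (p + q) = (\<Sum>m\<in>?A. const_poly (Poly_Mapping.lookup (p + q) m) * monF F m)"
    by (rule evm_superset) (auto dest: subsetD[OF keys_add])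
  also have "\<dots> = (\<Sum>m\<in>?A. const_poly (Poly_Mapping.lookup p m) * monF F m)
                 + (\<Sum>m\<in>?A. const_poly (Poly_Mapping.lookup q m) * monF F m)"
    by (simp add: lookup_add const_add distrib_right sum.distrib)
  also have "\<dots> = evm F p + evm F q"
    by (simp add: evm_superset[symmetric])
  finally show ?thesis .
qed

lemma evm_0 [simp]: "evm F 0 = 0" by (simp add: evm_def)

lemma evm_sum: "evm F (\<Sum>x\<in>A. f x) = (\<Sum>x\<in>A. evm F (f x))"
  by (induct A rule: infinite_finite_induct) (simp_all add: evm_add)

lemma evm_single: "evm F (Poly_Mapping.single m c) = const_poly c * monF F m"
  by (cases "c = 0") (simp_all add: evm_def)

lemma evm_mult: "evm F (p * q) = evm F p * evm F q"
proof -
  have pq: "p * q = (\<Sum>a\<in>Poly_Mapping.keys p. \<Sum>b\<in>Poly_Mapping.keys q.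
      Poly_Mapping.single (a + b) (Poly_Mapping.lookup p a * Poly_Mapping.lookup q b))"
    by (subst (1 2) pm_expand) (simp add: sum_product mult_single)
  have "evm F (p * q) = (\<Sum>a\<in>Poly_Mapping.keys p. \<Sum>b\<in>Poly_Mapping.keys q.
      (const_poly (Poly_Mapping.lookup p a) * monF F a) * (const_poly (Poly_Mapping.lookup q b) * monF F b))"
    by (simp add: pq evm_sum evm_single const_mult monF_add algebra_simps)
  also have "\<dots> = evm F p * evm F q"
    by (simp add: evm_def sum_product)
  finally show ?thesis .
qed

lemma evm_1: "evm F 1 = 1"
  by (simp add: evm_def)

lemma evm_hom: "ring_hom_fun (evm F)"
  by (simp add: ring_hom_fun_def evm_1 evm_add evm_mult)

lemma evm_const: "evm F (const_poly c) = const_poly c"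
  by (simp add: const_poly_def evm_single[unfolded const_poly_def])

lemma evm_var: "evm F (var_poly v) = F v"
  using monF_single[of F v] by (simp add: var_poly_def evm_single)

lemma evm_graded:
  fixes deg :: "'v::finite \<Rightarrow> 'g::ab_group_add" and F :: "'v \<Rightarrow> ('v,'k::comm_ring_1) mpoly"
  assumes hom: "\<forall>a b. \<psi> (a + b) = \<psi> a + \<psi> b"
    and F: "\<And>v. F v \<in> S_comp deg (\<psi> (deg v))"
    and p: "p \<in> S_comp deg w"
  shows "evm F p \<in> S_comp deg (\<psi> w)"
  unfolding evm_def
proof (rule S_sum)
  fix m assume m: "m \<in> Poly_Mapping.keys p"
  have "monF F m \<in> S_comp deg (\<Sum>v\<in>UNIV. nmult (Poly_Mapping.lookup m v) (\<psi> (deg v)))"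
    unfolding monF_def by (rule S_prod) (auto intro: S_pow F)
  moreover have "(\<Sum>v\<in>UNIV. nmult (Poly_Mapping.lookup m v) (\<psi> (deg v))) = \<psi> w"
  proof -
    have "mon_deg deg m = w" using p m by (simp add: S_comp_def)
    then have "\<psi> (\<Sum>v\<in>UNIV. nmult (Poly_Mapping.lookup m v) (deg v)) = \<psi> w"
      by (simp add: mon_deg_UNIV)
    then show ?thesis by (simp add: additive_sum[OF hom] additive_nmult[OF hom])
  qed
  ultimately show "const_poly (Poly_Mapping.lookup p m) * monF F m \<in> S_comp deg (\<psi> w)"
    using S_mult[OF const_S0] by fastforce
qed


section \<open>Total degree and the square of the maximal ideal\<close>

definition tot :: "('v::finite \<Rightarrow>\<^sub>0 nat) \<Rightarrow> nat" where
  "tot m = (\<Sum>v\<in>UNIV. Poly_Mapping.lookup m v)"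

lemma tot_add: "tot (a + b) = tot a + tot b"
  by (simp add: tot_def lookup_add sum.distrib)

lemma tot_single: "tot (Poly_Mapping.single v k) = k"
proof -
  have "tot (Poly_Mapping.single v k) = (\<Sum>u\<in>UNIV. if u = v then k else 0)"
    unfolding tot_def by (rule sum.cong) (auto simp: lookup_single)
  then show ?thesis by simp
qed

lemma tot_pos: "Poly_Mapping.lookup m v \<noteq> 0 \<Longrightarrow> Poly_Mapping.lookup m v \<le> tot m"
  unfolding tot_def by (rule member_le_sum) auto

lemma sq_ideal_keys:
  assumes "(q::('v::finite,'k::comm_ring_1) mpoly) \<in> ideal_gen {var_poly u * var_poly v | u v. True}"
  shows "\<forall>m\<in>Poly_Mapping.keys q. 2 \<le> tot m"
  using assms
proof (induct q rule: ideal_gen.induct)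
  case ig_zero then show ?case by simp
next
  case (ig_step g y a)
  from ig_step(1) obtain u v where g: "g = var_poly u * var_poly v" by blast
  have gk: "\<forall>m\<in>Poly_Mapping.keys g. 2 \<le> tot m"
    by (simp add: g var_poly_def mult_single tot_add tot_single)
  have "\<forall>m\<in>Poly_Mapping.keys (a * g). 2 \<le> tot m"
  proof
    fix m assume "m \<in> Poly_Mapping.keys (a * g)"
    then obtain m1 m2 where "m = m1 + m2" "m2 \<in> Poly_Mapping.keys g"
      using keys_mult[of a g] by blast
    then show "2 \<le> tot m" using gk by (fastforce simp: tot_add)
  qed
  then show ?case using ig_step(3) keys_add[of "a * g" y] by auto
qed

lemma var_minus_const_not_sq:
  fixes v :: "'v::finite" and c :: "'k::comm_ring_1"
  shows "(var_poly v :: ('v,'k) mpoly) - const_poly c \<notin> ideal_gen {var_poly u * var_poly v | u v. True}"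
proof
  assume a: "var_poly v - const_poly c \<in> ideal_gen {var_poly u * var_poly v | u v. True}"
  have "Poly_Mapping.lookup (var_poly v - const_poly c :: ('v,'k) mpoly) (Poly_Mapping.single v 1) = 1"
  proof -
    have "Poly_Mapping.single v (1::nat) \<noteq> 0"
      by (metis lookup_single_eq lookup_zero one_neq_zero)
    then show ?thesis by (simp add: var_poly_def const_poly_def lookup_minus lookup_single when_def)
  qed
  then have "Poly_Mapping.single v 1 \<in> Poly_Mapping.keys (var_poly v - const_poly c :: ('v,'k) mpoly)"
    by (simp add: in_keys_iff)
  with sq_ideal_keys[OF a] have "2 \<le> tot (Poly_Mapping.single v (1::nat))" by blast
  then show False by (simp only: tot_single)
qed


section \<open>Algebraic elements over an algebraically closed field\<close>

lemma map_poly_add_rh: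
  assumes "ring_hom_fun f"
  shows "map_poly f (p + q) = map_poly f p + map_poly f q"
  by (intro poly_eqI) (simp add: coeff_map_poly rh_0[OF assms] rh_add[OF assms])

lemma root_in_range:
  fixes alg :: "'k::field \<Rightarrow> 'r::idom"
  assumes acf: "alg_closed_field TYPE('k)" and h: "ring_hom_fun alg"
  shows "P \<noteq> 0 \<Longrightarrow> poly (map_poly alg P) x = 0 \<Longrightarrow> x \<in> range alg"
proof (induct "degree P" arbitrary: P rule: less_induct)
  case less
  have a0: "alg 0 = 0" by (rule rh_0[OF h])
  show ?case
  proof (cases "degree P = 0")
    case True
    then obtain a where P: "P = [:a:]" by (metis degree_eq_zeroE)
    with less have "a \<noteq> 0" by simp
    have "alg a * alg (inverse a) = 1"
      using rh_mult[OF h, of a "inverse a"] rh_1[OF h] \<open>a \<noteq> 0\<close> by simp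
    then have "alg a \<noteq> 0" by auto
    moreover have "poly (map_poly alg P) x = alg a"
      by (simp add: P map_poly_pCons a0)
    ultimately show ?thesis using less by simp
  next
    case False
    then obtain z where "poly P z = 0" using acf unfolding alg_closed_field_def by blast
    then obtain Q where PQ: "P = [:- z, 1:] * Q" by (metis dvdE poly_eq_0_iff_dvd)
    with less have Q0: "Q \<noteq> 0" by auto
    have "degree P = degree [:- z, 1:] + degree Q" unfolding PQ
      by (rule degree_mult_eq) (use Q0 in auto)
    then have "degree P = Suc (degree Q)" by simp
    then have dQ: "degree Q < degree P" by simp
    have "P = smult (- z) Q + pCons 0 Q" using PQ by simp
    then have "map_poly alg P = smult (alg (- z)) (map_poly alg Q) + pCons 0 (map_poly alg Q)"
      using map_poly_add_rh[OF h] map_poly_smult[of alg, OF a0 rh_mult[OF h]] map_poly_pCons[of alg, OF a0] a0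
      by metis
    then have "poly (map_poly alg P) x = alg (- z) * poly (map_poly alg Q) x + x * poly (map_poly alg Q) x"
      by simp
    also have "alg (- z) = - alg z" using rh_minus[OF h, of 0 z] a0 by simp
    finally have "(x - alg z) * poly (map_poly alg Q) x = 0"
      using less(3) by (auto simp: algebra_simps)
    then show ?thesis using less(1)[OF dQ Q0] by auto
  qed
qed


section \<open>Near-identity endomorphisms\<close>

lemma ideal_sum: "(\<And>x. x \<in> A \<Longrightarrow> f x \<in> ideal_gen G) \<Longrightarrow> (\<Sum>x\<in>A. f x) \<in> ideal_gen G"
  by (induct A rule: infinite_finite_induct) (simp_all add: ideal_zero ideal_add)

lemma theta_mult:
  assumes "ring_hom_fun \<Theta>" "\<Theta> a - a \<in> ideal_gen G" "\<Theta> b - b \<in> ideal_gen G"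
  shows "\<Theta> (a * b) - a * b \<in> ideal_gen G"
proof -
  have "\<Theta> (a * b) - a * b = \<Theta> a * (\<Theta> b - b) + b * (\<Theta> a - a)"
    by (simp add: rh_mult[OF assms(1)] algebra_simps)
  then show ?thesis using assms by (metis ideal_add ideal_mult)
qed

lemma theta_pow:
  assumes "ring_hom_fun \<Theta>" "\<Theta> a - a \<in> ideal_gen G"
  shows "\<Theta> (a ^ n) - a ^ n \<in> ideal_gen G"
proof (induct n)
  case 0 then show ?case by (simp add: rh_1[OF assms(1)] ideal_zero)
next
  case (Suc n) then show ?case using theta_mult[OF assms(1) assms(2) Suc] by simp
qed

lemma theta_prod:
  assumes "ring_hom_fun \<Theta>" "finite A" "\<And>x. x \<in> A \<Longrightarrow> \<Theta> (f x) - f x \<in> ideal_gen G"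
  shows "\<Theta> (\<Prod>x\<in>A. f x) - (\<Prod>x\<in>A. f x) \<in> ideal_gen G"
  using assms(2,3)
proof (induct A rule: finite_induct)
  case empty then show ?case by (simp add: rh_1[OF assms(1)] ideal_zero)
next
  case (insert x F) then show ?case using theta_mult[OF assms(1)] by simp
qed

lemma theta_diff:
  fixes \<Theta> :: "('v::finite,'k::comm_ring_1) mpoly \<Rightarrow> ('v,'k) mpoly"
  assumes h: "ring_hom_fun \<Theta>" and c: "\<And>c. \<Theta> (const_poly c) = const_poly c"
    and V: "\<And>v. v \<in> V \<Longrightarrow> \<Theta> (var_poly v) - var_poly v \<in> ideal_gen G"
    and p: "\<forall>m\<in>Poly_Mapping.keys p. \<forall>v. Poly_Mapping.lookup m v \<noteq> 0 \<longrightarrow> v \<in> V"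
  shows "\<Theta> p - p \<in> ideal_gen G"
proof -
  have "\<Theta> p - p = (\<Sum>m\<in>Poly_Mapping.keys p. \<Theta> (Poly_Mapping.single m (Poly_Mapping.lookup p m)) - Poly_Mapping.single m (Poly_Mapping.lookup p m))"
    by (subst (1 2) pm_expand) (simp add: rh_sum[OF h] sum_subtractf)
  also have "\<dots> \<in> ideal_gen G"
  proof (rule ideal_sum)
    fix m assume m: "m \<in> Poly_Mapping.keys p"
    define X where "X = (\<Prod>v\<in>UNIV. (var_poly v :: ('v,'k) mpoly) ^ Poly_Mapping.lookup m v)"
    have "\<Theta> X - X \<in> ideal_gen G"
      unfolding X_def
    proof (rule theta_prod[OF h])
      fix v :: 'v
      show "\<Theta> (var_poly v ^ Poly_Mapping.lookup m v) - var_poly v ^ Poly_Mapping.lookup m v \<in> ideal_gen G"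
      proof (cases "Poly_Mapping.lookup m v = 0")
        case True then show ?thesis by (simp add: rh_1[OF h] ideal_zero)
      next
        case False then show ?thesis using p m V theta_pow[OF h] by blast
      qed
    qed simp
    then have "const_poly (Poly_Mapping.lookup p m) * (\<Theta> X - X) \<in> ideal_gen G" by (rule ideal_mult)
    then show "\<Theta> (Poly_Mapping.single m (Poly_Mapping.lookup p m)) - Poly_Mapping.single m (Poly_Mapping.lookup p m) \<in> ideal_gen G"
      by (simp add: single_as X_def[symmetric] rh_mult[OF h] c algebra_simps)
  qed
  finally show ?thesis .
qed

lemma graded_aut_inv:
  assumes "graded_aut alg Rw \<phi> \<psi>"
  shows "graded_aut alg Rw (inv \<phi>) (inv \<psi>)"
proof -
  have bp: "bij \<phi>" and hp: "ring_hom_fun \<phi>" and ap: "\<forall>c. \<phi> (alg c) = alg c"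
    and bs: "bij \<psi>" and as: "\<forall>a b. \<psi> (a + b) = \<psi> a + \<psi> b"
    and im: "\<forall>w. \<phi> ` Rw w = Rw (\<psi> w)"
    using assms unfolding graded_aut_def by blast+
  have ip: "inj \<phi>" using bp unfolding bij_def by (elim conjE)
  have sp: "surj \<phi>" using bp unfolding bij_def by (elim conjE)
  have is': "inj \<psi>" using bs unfolding bij_def by (elim conjE)
  have ss: "surj \<psi>" using bs unfolding bij_def by (elim conjE)
  have fp: "\<phi> (inv \<phi> x) = x" for x using sp by (rule surj_f_inv_f)
  have fs: "\<psi> (inv \<psi> x) = x" for x using ss by (rule surj_f_inv_f)
  have gp: "inv \<phi> (\<phi> x) = x" for x using ip by (rule inv_f_f)
  have gs: "inv \<psi> (\<psi> x) = x" for x using is' by (rule inv_f_f)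
  have "ring_hom_fun (inv \<phi>)"
    unfolding ring_hom_fun_def
  proof (intro conjI allI)
    show "inv \<phi> 1 = 1" using gp[of 1] rh_1[OF hp] by simp
    show "inv \<phi> (x + y) = inv \<phi> x + inv \<phi> y" for x y
    proof -
      have "x + y = \<phi> (inv \<phi> x + inv \<phi> y)" by (simp add: rh_add[OF hp] fp)
      then show ?thesis by (simp add: gp)
    qed
    show "inv \<phi> (x * y) = inv \<phi> x * inv \<phi> y" for x y
    proof -
      have "x * y = \<phi> (inv \<phi> x * inv \<phi> y)" by (simp add: rh_mult[OF hp] fp)
      then show ?thesis by (simp add: gp)
    qed
  qed
  moreover have "\<forall>c. inv \<phi> (alg c) = alg c"
  proof
    fix c have "inv \<phi> (\<phi> (alg c)) = alg c" by (rule gp)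
    then show "inv \<phi> (alg c) = alg c" using ap by simp
  qed
  moreover have "\<forall>a b. inv \<psi> (a + b) = inv \<psi> a + inv \<psi> b"
  proof (intro allI)
    fix a b
    have "a + b = \<psi> (inv \<psi> a + inv \<psi> b)" using as fs by simp
    then show "inv \<psi> (a + b) = inv \<psi> a + inv \<psi> b" by (simp add: gs)
  qed
  moreover have "\<forall>w. inv \<phi> ` Rw w = Rw (inv \<psi> w)"
  proof
    fix w
    have "Rw w = \<phi> ` Rw (inv \<psi> w)" using im fs by metis
    then have "inv \<phi> ` Rw w = inv \<phi> ` \<phi> ` Rw (inv \<psi> w)" by simp
    also have "\<dots> = Rw (inv \<psi> w)" by (simp add: image_comp gp)
    finally show "inv \<phi> ` Rw w = Rw (inv \<psi> w)" .
  qed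
  ultimately show ?thesis using bp bs unfolding graded_aut_def
    by (simp add: bij_imp_bij_inv)
qed

definition comp :: "('v::finite \<Rightarrow> 'g::ab_group_add) \<Rightarrow> 'g \<Rightarrow> ('v,'k::comm_ring_1) mpoly \<Rightarrow> ('v,'k) mpoly" where
  "comp deg w p = (\<Sum>m\<in>{m\<in>Poly_Mapping.keys p. mon_deg deg m = w}. Poly_Mapping.single m (Poly_Mapping.lookup p m))"

lemma comp_S: "comp deg w p \<in> S_comp deg w"
  unfolding comp_def by (rule S_sum) (auto simp: S_comp_def)

lemma comp_sum: "p = (\<Sum>w\<in>mon_deg deg ` Poly_Mapping.keys p. comp deg w p)"
  unfolding comp_def
  by (subst sum.group[where g = "mon_deg deg" and S = "Poly_Mapping.keys p"]) (auto intro: pm_expand)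

lemma comp_out: "w \<notin> mon_deg deg ` Poly_Mapping.keys p \<Longrightarrow> comp deg w p = 0"
  unfolding comp_def by (rule sum.neutral) auto

locale pres =
  fixes alg :: "'k::field \<Rightarrow> 'r::idom"
    and Rw :: "'g::ab_group_add \<Rightarrow> 'r set"
    and deg :: "'v::finite \<Rightarrow> 'g"
    and \<pi> :: "('v, 'k) mpoly \<Rightarrow> 'r"
  assumes acf: "alg_closed_field TYPE('k)"
    and alg: "ring_hom_fun alg"
    and gr: "is_grading alg Rw"
    and pt: "pointed_grading alg Rw"
    and mp: "minimal_presentation alg Rw deg \<pi>"
begin

lemma Rw_0: "0 \<in> Rw w" using gr unfolding is_grading_def by blast
lemma Rw_mult: "x \<in> Rw w \<Longrightarrow> y \<in> Rw w' \<Longrightarrow> x * y \<in> Rw (w + w')"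
  using gr unfolding is_grading_def by blast
lemma Rw_zero_deg: "Rw 0 = range alg" using pt unfolding pointed_grading_def by blast
lemma pi_hom: "ring_hom_fun \<pi>" using mp unfolding minimal_presentation_def by blast
lemma pi_const: "\<pi> (const_poly c) = alg c" using mp unfolding minimal_presentation_def by blast
lemma pi_surj: "surj \<pi>" using mp unfolding minimal_presentation_def by blast
lemma pi_graded: "p \<in> S_comp deg w \<Longrightarrow> \<pi> p \<in> Rw w" using mp unfolding minimal_presentation_def by blast
lemma pi_min: "\<pi> f = 0 \<Longrightarrow> f \<in> ideal_gen {var_poly u * var_poly v | u v. True}"
  using mp unfolding minimal_presentation_def by blast

lemma decomp_eq:
  assumes A: "finite A" "\<forall>w\<in>A. c w \<in> Rw w" and B: "finite B" "\<forall>w\<in>B. d w \<in> Rw w"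
    and eq: "(\<Sum>w\<in>A. c w) = (\<Sum>w\<in>B. d w)"
  shows "(if u \<in> A then c u else 0) = (if u \<in> B then d u else 0)"
proof -
  define x where "x = (\<Sum>w\<in>A. c w)"
  define c' where "c' = (\<lambda>w. if w \<in> A then c w else 0)"
  define d' where "d' = (\<lambda>w. if w \<in> B then d w else 0)"
  define Pd where "Pd = (\<lambda>e::'g \<Rightarrow> 'r. finite {w. e w \<noteq> 0} \<and> (\<forall>w. e w \<in> Rw w) \<and> x = (\<Sum>w\<in>{w. e w \<noteq> 0}. e w))"
  have "\<forall>x. \<exists>!e::'g \<Rightarrow> 'r. finite {w. e w \<noteq> 0} \<and> (\<forall>w. e w \<in> Rw w) \<and> x = (\<Sum>w\<in>{w. e w \<noteq> 0}. e w)"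
    using gr unfolding is_grading_def by (elim conjE)
  then have uq: "\<exists>!e. Pd e" unfolding Pd_def by (rule spec)
  then obtain e where e: "\<And>y. Pd y \<Longrightarrow> y = e" by (auto simp: Ex1_def)
  have "finite {w. c' w \<noteq> 0} \<and> (\<forall>w. c' w \<in> Rw w) \<and> x = (\<Sum>w\<in>{w. c' w \<noteq> 0}. c' w)"
  proof (intro conjI allI)
    show "finite {w. c' w \<noteq> 0}" using A(1) by (rule finite_subset[rotated]) (auto simp: c'_def)
    show "c' w \<in> Rw w" for w using A(2) Rw_0 by (auto simp: c'_def)
    have "(\<Sum>w\<in>{w. c' w \<noteq> 0}. c' w) = (\<Sum>w\<in>A. c' w)"
      by (rule sum.mono_neutral_left) (use A(1) in \<open>auto simp: c'_def\<close>)
    then show "x = (\<Sum>w\<in>{w. c' w \<noteq> 0}. c' w)" by (simp add: x_def c'_def)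
  qed
  moreover have "finite {w. d' w \<noteq> 0} \<and> (\<forall>w. d' w \<in> Rw w) \<and> x = (\<Sum>w\<in>{w. d' w \<noteq> 0}. d' w)"
  proof (intro conjI allI)
    show "finite {w. d' w \<noteq> 0}" using B(1) by (rule finite_subset[rotated]) (auto simp: d'_def)
    show "d' w \<in> Rw w" for w using B(2) Rw_0 by (auto simp: d'_def)
    have "(\<Sum>w\<in>{w. d' w \<noteq> 0}. d' w) = (\<Sum>w\<in>B. d' w)"
      by (rule sum.mono_neutral_left) (use B(1) in \<open>auto simp: d'_def\<close>)
    then show "x = (\<Sum>w\<in>{w. d' w \<noteq> 0}. d' w)" by (simp add: x_def d'_def eq)
  qed
  ultimately have "c' = d'" using e unfolding Pd_def by metis
  then show ?thesis unfolding c'_def d'_def by metis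
qed

lemma deg_unique: "x \<noteq> 0 \<Longrightarrow> x \<in> Rw u \<Longrightarrow> x \<in> Rw u' \<Longrightarrow> u = u'"
  using decomp_eq[of "{u}" "\<lambda>_. x" "{u'}" "\<lambda>_. x" u] by (auto split: if_splits)

lemma pi_comp:
  assumes "y \<in> Rw u" "\<pi> p = y"
  shows "\<pi> (comp deg u p) = y"
proof -
  let ?W = "mon_deg deg ` Poly_Mapping.keys p"
  have eqS: "(\<Sum>w\<in>?W. \<pi> (comp deg w p)) = (\<Sum>w\<in>{u}. y)"
  proof -
    have "\<pi> p = (\<Sum>w\<in>?W. \<pi> (comp deg w p))"
      by (subst comp_sum[of p deg]) (rule rh_sum[OF pi_hom])
    then show ?thesis using assms(2) by simp
  qed
  have h1: "\<forall>w\<in>?W. \<pi> (comp deg w p) \<in> Rw w" by (auto intro: pi_graded comp_S)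
  from decomp_eq[OF _ h1 _ _ eqS, of u] assms(1) have "(if u \<in> ?W then \<pi> (comp deg u p) else 0) = y"
    by auto
  then show ?thesis using comp_out[of u deg p] rh_0[OF pi_hom] by (auto split: if_splits)
qed

lemma pow_Rw: "x \<in> Rw w \<Longrightarrow> x ^ n \<in> Rw (nmult n w)"
proof (induct n)
  case 0 then show ?case using Rw_zero_deg rh_1[OF alg] by (metis nmult_0 power_0 rangeI)
next
  case (Suc n) then show ?case using Rw_mult by (simp add: nmult_Suc)
qed

lemma torsion_zero:
  assumes "x \<in> Rw w" "x \<noteq> 0" "torsion_elem w"
  shows "w = 0"
proof -
  obtain n where n: "n > 0" "nmult n w = 0" using assms(3) unfolding torsion_elem_def by blast
  have "x ^ n \<in> Rw 0" using pow_Rw[OF assms(1), of n] n by simp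
  then obtain c where c: "x ^ n = alg c" using Rw_zero_deg by auto
  define P where "P = [:- c:] + monom 1 n"
  have "degree P = n" unfolding P_def
    by (subst add.commute, subst degree_add_eq_left) (use n in \<open>auto simp: degree_monom_eq\<close>)
  then have "P \<noteq> 0" using n by auto
  have a0: "alg 0 = 0" by (rule rh_0[OF alg])
  have "map_poly alg P = [:alg (- c):] + monom 1 n"
    unfolding P_def map_poly_add_rh[OF alg]
    by (simp add: map_poly_pCons a0 map_poly_monom rh_1[OF alg])
  then have "poly (map_poly alg P) x = alg (- c) + x ^ n" by (simp add: poly_monom)
  also have "alg (- c) = - alg c" using rh_minus[OF alg, of 0 c] a0 by simp
  finally have "poly (map_poly alg P) x = 0" using c by simp
  then have "x \<in> range alg" by (rule root_in_range[OF acf alg \<open>P \<noteq> 0\<close>])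
  then have "x \<in> Rw 0" using Rw_zero_deg by simp
  then show ?thesis using deg_unique[OF assms(2) assms(1)] by simp
qed

lemma var_Rw: "\<pi> (var_poly v) \<in> Rw (deg v)"
  by (rule pi_graded[OF var_S])

lemma var_nonzero: "\<pi> (var_poly v) \<noteq> 0"
proof
  assume "\<pi> (var_poly v) = 0"
  then have "(var_poly v :: ('v,'k) mpoly) - const_poly 0 \<in> ideal_gen {var_poly u * var_poly v | u v. True}"
    using pi_min[of "var_poly v"] by simp
  then show False using var_minus_const_not_sq by blast
qed

lemma deg_nonzero: "deg v \<noteq> 0"
proof
  assume "deg v = 0"
  then obtain c where "\<pi> (var_poly v) = alg c" using var_Rw[of v] Rw_zero_deg by auto
  then have "\<pi> (var_poly v - const_poly c) = 0" by (simp add: rh_minus[OF pi_hom] pi_const)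
  then show False using pi_min var_minus_const_not_sq by blast
qed

lemma deg_weight: "deg v \<in> weight_monoid Rw"
  using var_Rw[of v] var_nonzero[of v] unfolding weight_monoid_def by auto

lemma deg_not_torsion: "\<not> torsion_elem (deg v)"
  using torsion_zero[OF var_Rw var_nonzero] deg_nonzero by blast

lemma mon_deg_eq_0: "mon_deg deg m = 0 \<Longrightarrow> m = 0"
proof (rule ccontr)
  assume m0: "mon_deg deg m = 0" and "m \<noteq> 0"
  then obtain v where v: "Poly_Mapping.lookup m v \<noteq> 0"
    by (metis keys_eq_empty all_not_in_conv in_keys_iff)
  obtain xs :: "'v list" where xs: "distinct xs" "set xs = UNIV"
    using finite_distinct_list[of "UNIV :: 'v set"] by auto
  define ws where "ws = concat (map (\<lambda>u. replicate (Poly_Mapping.lookup m u) (deg u)) xs)"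
  have "sum_list ws = sum_list (map (\<lambda>u. nmult (Poly_Mapping.lookup m u) (deg u)) xs)"
    unfolding ws_def by (induct xs) (simp_all add: nmult_def)
  also have "\<dots> = mon_deg deg m"
    by (simp add: sum_list_distinct_conv_sum_set[OF xs(1)] xs(2) mon_deg_UNIV)
  finally have "torsion_elem (sum_list ws)" using m0
    unfolding torsion_elem_def by (intro exI[of _ 1]) simp
  moreover have "set ws \<subseteq> weight_monoid Rw" unfolding ws_def using deg_weight by auto
  ultimately have "\<forall>w\<in>set ws. torsion_elem w"
    using pt unfolding pointed_grading_def cone_pointed_def by blast
  moreover have "deg v \<in> set ws" unfolding ws_def using v xs(2) by auto
  ultimately show False using deg_not_torsion by blast
qed


lemma MS_iff: "w \<in> (weight_monoid (S_comp deg :: 'g \<Rightarrow> ('v,'k) mpoly set)) \<longleftrightarrow> (\<exists>m. mon_deg deg m = w)"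
proof
  assume "w \<in> (weight_monoid (S_comp deg :: 'g \<Rightarrow> ('v,'k) mpoly set))"
  then have ne: "(S_comp deg w :: ('v,'k) mpoly set) \<noteq> {0}" by (simp add: weight_monoid_def)
  have "\<exists>p::('v,'k) mpoly. p \<in> S_comp deg w \<and> p \<noteq> 0"
  proof (rule ccontr)
    assume "\<not> ?thesis"
    then have "(S_comp deg w :: ('v,'k) mpoly set) \<subseteq> {0}" by blast
    then show False using ne S_zero[of deg w] by blast
  qed
  then obtain p :: "('v,'k) mpoly" where p: "p \<in> S_comp deg w" "p \<noteq> 0" by blast
  then obtain m where "m \<in> Poly_Mapping.keys p" using keys_eq_empty by blast
  then have "mon_deg deg m = w" using p(1) by (simp add: S_comp_def)
  then show "\<exists>m. mon_deg deg m = w" by blast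
next
  assume "\<exists>m. mon_deg deg m = w"
  then obtain m where m: "mon_deg deg m = w" by blast
  have "Poly_Mapping.single m (1::'k) \<in> S_comp deg w" using single_S[of m 1 deg] m by simp
  moreover have "Poly_Mapping.single m (1::'k) \<noteq> 0" by (metis lookup_single_eq lookup_zero one_neq_zero)
  ultimately show "w \<in> (weight_monoid (S_comp deg :: 'g \<Rightarrow> ('v,'k) mpoly set))" unfolding weight_monoid_def by blast
qed

lemma MS_add: "a \<in> (weight_monoid (S_comp deg :: 'g \<Rightarrow> ('v,'k) mpoly set)) \<Longrightarrow> b \<in> (weight_monoid (S_comp deg :: 'g \<Rightarrow> ('v,'k) mpoly set)) \<Longrightarrow> a + b \<in> (weight_monoid (S_comp deg :: 'g \<Rightarrow> ('v,'k) mpoly set))"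
  unfolding MS_iff using mon_deg_add by metis
lemma MS_0: "0 \<in> (weight_monoid (S_comp deg :: 'g \<Rightarrow> ('v,'k) mpoly set))" unfolding MS_iff using mon_deg_zero by metis
lemma MS_nmult: "a \<in> (weight_monoid (S_comp deg :: 'g \<Rightarrow> ('v,'k) mpoly set)) \<Longrightarrow> nmult n a \<in> (weight_monoid (S_comp deg :: 'g \<Rightarrow> ('v,'k) mpoly set))"
  by (induct n) (simp_all add: MS_0 MS_add nmult_Suc)
lemma MS_sum: "(\<And>x. x \<in> A \<Longrightarrow> f x \<in> (weight_monoid (S_comp deg :: 'g \<Rightarrow> ('v,'k) mpoly set))) \<Longrightarrow> (\<Sum>x\<in>A. f x) \<in> (weight_monoid (S_comp deg :: 'g \<Rightarrow> ('v,'k) mpoly set))"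
  by (induct A rule: infinite_finite_induct) (simp_all add: MS_0 MS_add)

lemma WR_MS: "w \<in> weight_monoid Rw \<Longrightarrow> w \<in> (weight_monoid (S_comp deg :: 'g \<Rightarrow> ('v,'k) mpoly set))"
proof -
  assume "w \<in> weight_monoid Rw"
  then obtain y where y: "y \<in> Rw w" "y \<noteq> 0" unfolding weight_monoid_def using Rw_0 by blast
  obtain p where "\<pi> p = y" using pi_surj by (metis surjD)
  then have "\<pi> (comp deg w p) = y" using pi_comp y(1) by blast
  then have "comp deg w p \<noteq> 0" using y(2) rh_0[OF pi_hom] by auto
  then show "w \<in> (weight_monoid (S_comp deg :: 'g \<Rightarrow> ('v,'k) mpoly set))" unfolding weight_monoid_def using comp_S by blast
qed

lemma deg_less_iff: "deg_less deg TYPE('k) w' w \<longleftrightarrow> w - w' \<in> (weight_monoid (S_comp deg :: 'g \<Rightarrow> ('v,'k) mpoly set)) \<and> w' \<noteq> w"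
  unfolding deg_less_def deg_le_def by simp

lemma lift:
  assumes aut: "graded_aut alg Rw \<phi> \<psi>"
  shows "\<exists>\<Phi>. ring_hom_fun \<Phi> \<and> (\<forall>c. \<Phi> (const_poly c) = const_poly c)
     \<and> (\<forall>w p. p \<in> S_comp deg w \<longrightarrow> \<Phi> p \<in> S_comp deg (\<psi> w)) \<and> (\<forall>p. \<pi> (\<Phi> p) = \<phi> (\<pi> p))"
proof -
  have hp: "ring_hom_fun \<phi>" and ap: "\<forall>c. \<phi> (alg c) = alg c"
    and as: "\<forall>a b. \<psi> (a + b) = \<psi> a + \<psi> b" and im: "\<forall>w. \<phi> ` Rw w = Rw (\<psi> w)"
    using aut unfolding graded_aut_def by blast+
  define F where "F = (\<lambda>v. comp deg (\<psi> (deg v)) (SOME p. \<pi> p = \<phi> (\<pi> (var_poly v))))"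
  have FS: "F v \<in> S_comp deg (\<psi> (deg v))" for v unfolding F_def by (rule comp_S)
  have Fpi: "\<pi> (F v) = \<phi> (\<pi> (var_poly v))" for v
  proof -
    have "\<phi> (\<pi> (var_poly v)) \<in> Rw (\<psi> (deg v))" using imageI[OF var_Rw[of v], of \<phi>] im by simp
    moreover have "\<pi> (SOME p. \<pi> p = \<phi> (\<pi> (var_poly v))) = \<phi> (\<pi> (var_poly v))"
    proof -
      obtain p0 where "\<phi> (\<pi> (var_poly v)) = \<pi> p0" using surjD[OF pi_surj] by blast
      then show ?thesis by (metis (mono_tags, lifting) someI)
    qed
    ultimately show ?thesis unfolding F_def by (rule pi_comp)
  qed
  have "\<pi> (evm F p) = \<phi> (\<pi> p)" for p
  proof -
    have "(\<pi> \<circ> evm F) p = (\<phi> \<circ> \<pi>) p"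
    proof (rule rh_agree)
      show "ring_hom_fun (\<pi> \<circ> evm F)" by (rule rh_comp[OF pi_hom evm_hom])
      show "ring_hom_fun (\<phi> \<circ> \<pi>)" by (rule rh_comp[OF hp pi_hom])
      show "(\<pi> \<circ> evm F) (const_poly c) = (\<phi> \<circ> \<pi>) (const_poly c)" for c
        by (simp add: evm_const pi_const ap)
      show "(\<pi> \<circ> evm F) (var_poly v) = (\<phi> \<circ> \<pi>) (var_poly v)" for v
        by (simp add: evm_var Fpi)
    qed
    then show ?thesis by simp
  qed
  moreover have "\<forall>w p. p \<in> S_comp deg w \<longrightarrow> evm F p \<in> S_comp deg (\<psi> w)"
    using evm_graded[OF as FS] by blast
  ultimately show ?thesis using evm_hom evm_const by blast
qed

lemma psi_MS:
  assumes aut: "graded_aut alg Rw \<phi> \<psi>" and w: "w \<in> (weight_monoid (S_comp deg :: 'g \<Rightarrow> ('v,'k) mpoly set))"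
  shows "\<psi> w \<in> (weight_monoid (S_comp deg :: 'g \<Rightarrow> ('v,'k) mpoly set))"
proof -
  have hp: "ring_hom_fun \<phi>" and bp: "bij \<phi>"
    and as: "\<forall>a b. \<psi> (a + b) = \<psi> a + \<psi> b" and im: "\<forall>w. \<phi> ` Rw w = Rw (\<psi> w)"
    using aut unfolding graded_aut_def by blast+
  have "\<psi> (deg v) \<in> (weight_monoid (S_comp deg :: 'g \<Rightarrow> ('v,'k) mpoly set))" for v
  proof -
    have "\<phi> (\<pi> (var_poly v)) \<in> Rw (\<psi> (deg v))" using imageI[OF var_Rw[of v], of \<phi>] im by simp
    moreover have "\<phi> (\<pi> (var_poly v)) \<noteq> 0"
      using var_nonzero bp rh_0[OF hp] unfolding bij_def inj_def by metis
    ultimately have "\<psi> (deg v) \<in> weight_monoid Rw" unfolding weight_monoid_def by auto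
    then show ?thesis by (rule WR_MS)
  qed
  moreover obtain m where "mon_deg deg m = w" using w MS_iff by blast
  ultimately show ?thesis
    by (auto simp: mon_deg_UNIV additive_sum[OF as] additive_nmult[OF as] intro!: MS_sum MS_nmult)
qed

lemma lift_ideal:
  assumes aut: "graded_aut alg Rw \<phi> \<psi>" and hP: "ring_hom_fun \<Phi>"
    and gP: "\<forall>w p. p \<in> S_comp deg w \<longrightarrow> \<Phi> p \<in> S_comp deg (\<psi> w)"
    and cP: "\<forall>p. \<pi> (\<Phi> p) = \<phi> (\<pi> p)"
  shows "q \<in> ideal_below deg {f. \<pi> f = 0} u \<Longrightarrow> \<Phi> q \<in> ideal_below deg {f. \<pi> f = 0} (\<psi> u)"
proof -
  have hp: "ring_hom_fun \<phi>" and bs: "bij \<psi>"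
    and as: "\<forall>a b. \<psi> (a + b) = \<psi> a + \<psi> b"
    using aut unfolding graded_aut_def by blast+
  assume "q \<in> ideal_below deg {f. \<pi> f = 0} u"
  then show ?thesis unfolding ideal_below_def
  proof (induct q rule: ideal_gen.induct)
    case ig_zero then show ?case by (simp add: rh_0[OF hP] ideal_zero)
  next
    case (ig_step g y a)
    from ig_step(1) obtain w' where w': "deg_less deg TYPE('k) w' u" "g \<in> {f. \<pi> f = 0}" "g \<in> S_comp deg w'" by blast
    have "\<Phi> g \<in> {f. \<pi> f = 0}" using w'(2) cP rh_0[OF hp] by simp
    moreover have "\<Phi> g \<in> S_comp deg (\<psi> w')" using gP w'(3) by blast
    moreover have "deg_less deg TYPE('k) (\<psi> w') (\<psi> u)"
    proof -
      have "u - w' \<in> (weight_monoid (S_comp deg :: 'g \<Rightarrow> ('v,'k) mpoly set))" "w' \<noteq> u" using w'(1) deg_less_iff by blast+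
      then have "\<psi> (u - w') \<in> (weight_monoid (S_comp deg :: 'g \<Rightarrow> ('v,'k) mpoly set))" using psi_MS[OF aut] by blast
      moreover have "\<psi> (u - w') = \<psi> u - \<psi> w'" by (rule additive_minus[OF as])
      moreover have "\<psi> w' \<noteq> \<psi> u" using \<open>w' \<noteq> u\<close> bs unfolding bij_def inj_def by blast
      ultimately show ?thesis using deg_less_iff by simp
    qed
    ultimately have "\<Phi> g \<in> (\<Union>w'\<in>{w'. deg_less deg TYPE('k) w' (\<psi> u)}. {f. \<pi> f = 0} \<inter> S_comp deg w')" by blast
    then have "\<Phi> a * \<Phi> g + \<Phi> y \<in> ideal_gen (\<Union>w'\<in>{w'. deg_less deg TYPE('k) w' (\<psi> u)}. {f. \<pi> f = 0} \<inter> S_comp deg w')"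
      using ig_step(3) by (rule ideal_gen.ig_step)
    then show ?case by (simp add: rh_add[OF hP] rh_mult[OF hP])
  qed
qed

lemma var_condition:
  assumes f: "\<pi> f = 0" "f \<in> S_comp deg w"
    and m: "m \<in> Poly_Mapping.keys f" and v: "Poly_Mapping.lookup m v \<noteq> 0"
  shows "deg_less deg TYPE('k) (deg v) w"
proof -
  have "2 \<le> tot m" using sq_ideal_keys[OF pi_min[OF f(1)]] m by blast
  have mw: "mon_deg deg m = w" using f(2) m by (simp add: S_comp_def)
  define m' where "m' = m - Poly_Mapping.single v 1"
  have mm: "m = m' + Poly_Mapping.single v 1"
  proof (rule poly_mapping_eqI)
    fix k show "Poly_Mapping.lookup m k = Poly_Mapping.lookup (m' + Poly_Mapping.single v 1) k"
      using v by (cases "k = v") (auto simp: m'_def lookup_add lookup_minus lookup_single)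
  qed
  then have "tot m = tot m' + 1" by (simp add: tot_add tot_single)
  then have "tot m' \<noteq> 0" using \<open>2 \<le> tot m\<close> by simp
  then have m'0: "m' \<noteq> 0" using tot_single[of v 0] by auto
  have "mon_deg deg m = mon_deg deg m' + deg v"
    using mm by (simp add: mon_deg_add mon_deg_single)
  then have eq: "w - deg v = mon_deg deg m'" using mw by (simp add: algebra_simps)
  then have "w - deg v \<in> (weight_monoid (S_comp deg :: 'g \<Rightarrow> ('v,'k) mpoly set))"
    using MS_iff[of "w - deg v"] by metis
  moreover have "deg v \<noteq> w"
  proof
    assume "deg v = w"
    then have "mon_deg deg m' = 0" using eq by simp
    then show False using mon_deg_eq_0[of m'] m'0 by simp
  qed
  ultimately show ?thesis by (simp add: deg_less_iff)
qed

lemma main_step: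
  assumes aut: "graded_aut alg Rw \<phi> \<psi>" and w: "w \<in> gen_degrees deg {f. \<pi> f = 0}"
  shows "\<psi> w \<in> gen_degrees deg {f. \<pi> f = 0}"
proof (rule ccontr)
  let ?I = "{f. \<pi> f = 0}"
  assume "\<psi> w \<notin> gen_degrees deg ?I"
  then have sub: "?I \<inter> S_comp deg (\<psi> w) \<subseteq> ideal_below deg ?I (\<psi> w)"
    unfolding gen_degrees_def by simp
  have aut': "graded_aut alg Rw (inv \<phi>) (inv \<psi>)" by (rule graded_aut_inv[OF aut])
  have hp: "ring_hom_fun \<phi>" and bp: "bij \<phi>" and bs: "bij \<psi>"
    using aut unfolding graded_aut_def by blast+
  have gp: "inv \<phi> (\<phi> x) = x" for x using bp by (simp add: bij_def inv_f_f)
  have gs: "inv \<psi> (\<psi> x) = x" for x using bs by (simp add: bij_def inv_f_f)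
  obtain \<Phi> where hP: "ring_hom_fun \<Phi>" and cP: "\<forall>c. \<Phi> (const_poly c) = const_poly c"
    and gP: "\<forall>w p. p \<in> S_comp deg w \<longrightarrow> \<Phi> p \<in> S_comp deg (\<psi> w)"
    and pP: "\<forall>p. \<pi> (\<Phi> p) = \<phi> (\<pi> p)"
    using lift[OF aut] by blast
  obtain \<Phi>' where hP': "ring_hom_fun \<Phi>'" and cP': "\<forall>c. \<Phi>' (const_poly c) = const_poly c"
    and gP': "\<forall>w p. p \<in> S_comp deg w \<longrightarrow> \<Phi>' p \<in> S_comp deg (inv \<psi> w)"
    and pP': "\<forall>p. \<pi> (\<Phi>' p) = inv \<phi> (\<pi> p)"
    using lift[OF aut'] by blast
  have "?I \<inter> S_comp deg w \<subseteq> ideal_below deg ?I w"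
  proof
    fix f assume f: "f \<in> ?I \<inter> S_comp deg w"
    have "\<Phi> f \<in> ?I \<inter> S_comp deg (\<psi> w)" using f pP gP rh_0[OF hp] by auto
    then have "\<Phi> f \<in> ideal_below deg ?I (\<psi> w)" using sub by blast
    then have A: "\<Phi>' (\<Phi> f) \<in> ideal_below deg ?I w"
      using lift_ideal[OF aut' hP' gP' pP'] gs by metis
    define \<Theta> where "\<Theta> = \<Phi>' \<circ> \<Phi>"
    have hT: "ring_hom_fun \<Theta>" unfolding \<Theta>_def by (rule rh_comp[OF hP' hP])
    have B: "\<Theta> f - f \<in> ideal_below deg ?I w"
      unfolding ideal_below_def
    proof (rule theta_diff[where V = "{v. deg_less deg TYPE('k) (deg v) w}"])
      show "ring_hom_fun \<Theta>" by (rule hT)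
      show "\<Theta> (const_poly c) = const_poly c" for c by (simp add: \<Theta>_def cP cP')
      show "\<Theta> (var_poly v) - var_poly v \<in> ideal_gen (\<Union>w'\<in>{w'. deg_less deg TYPE('k) w' w}. ?I \<inter> S_comp deg w')"
        if "v \<in> {v. deg_less deg TYPE('k) (deg v) w}" for v
      proof (rule ideal_gen_in)
        have "\<pi> (\<Theta> (var_poly v) - var_poly v) = 0"
          by (simp add: \<Theta>_def rh_minus[OF pi_hom] pP pP' gp)
        moreover have "\<Theta> (var_poly v) - var_poly v \<in> S_comp deg (deg v)"
        proof (rule S_diff)
          have "\<Phi> (var_poly v) \<in> S_comp deg (\<psi> (deg v))" using gP var_S by blast
          then have "\<Phi>' (\<Phi> (var_poly v)) \<in> S_comp deg (inv \<psi> (\<psi> (deg v)))" using gP' by blast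
          then show "\<Theta> (var_poly v) \<in> S_comp deg (deg v)" by (simp add: \<Theta>_def gs)
        qed (rule var_S)
        ultimately show "\<Theta> (var_poly v) - var_poly v \<in> (\<Union>w'\<in>{w'. deg_less deg TYPE('k) w' w}. ?I \<inter> S_comp deg w')"
          using that by blast
      qed
      show "\<forall>m\<in>Poly_Mapping.keys f. \<forall>v. Poly_Mapping.lookup m v \<noteq> 0 \<longrightarrow> v \<in> {v. deg_less deg TYPE('k) (deg v) w}"
        using f var_condition by blast
    qed
    have A': "\<Theta> f \<in> ideal_below deg ?I w" using A by (simp add: \<Theta>_def)
    have "\<Theta> f - (\<Theta> f - f) \<in> ideal_below deg ?I w"
      unfolding ideal_below_def
      by (rule ideal_diff[OF A'[unfolded ideal_below_def] B[unfolded ideal_below_def]])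
    then show "f \<in> ideal_below deg ?I w" by simp
  qed
  then show False using w unfolding gen_degrees_def by simp
qed

end

theorem proposition2p6:
  fixes alg :: "'k::field_char_0 \<Rightarrow> 'r::idom"
    and Rw :: "'g::ab_group_add \<Rightarrow> 'r set"
    and deg :: "'v::finite \<Rightarrow> 'g"
    and \<pi> :: "('v, 'k) mpoly \<Rightarrow> 'r"
    and \<phi> :: "'r \<Rightarrow> 'r" and \<psi> :: "'g \<Rightarrow> 'g"
  assumes "alg_closed_field TYPE('k)"
    and "ring_hom_fun alg"
    and "fin_gen_algebra alg"
    and "fin_gen_group TYPE('g)"
    and "is_grading alg Rw"
    and "effective_grading Rw"
    and "pointed_grading alg Rw"
    and "minimal_presentation alg Rw deg \<pi>"
    and "graded_aut alg Rw \<phi> \<psi>"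
  shows "\<psi> ` gen_degrees deg {f. \<pi> f = 0} = gen_degrees deg {f. \<pi> f = 0}"
proof -
  interpret pres alg Rw deg \<pi>
    using assms by unfold_locales
  have aut: "graded_aut alg Rw \<phi> \<psi>" by fact
  have aut': "graded_aut alg Rw (inv \<phi>) (inv \<psi>)" by (rule graded_aut_inv[OF aut])
  have bs: "bij \<psi>" using aut unfolding graded_aut_def by blast
  have fs: "\<psi> (inv \<psi> x) = x" for x using bs by (simp add: bij_def surj_f_inv_f)
  show ?thesis
  proof
    show "\<psi> ` gen_degrees deg {f. \<pi> f = 0} \<subseteq> gen_degrees deg {f. \<pi> f = 0}"
      using main_step[OF aut] by blast
    show "gen_degrees deg {f. \<pi> f = 0} \<subseteq> \<psi> ` gen_degrees deg {f. \<pi> f = 0}"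
    proof
      fix w assume "w \<in> gen_degrees deg {f. \<pi> f = 0}"
      then have "inv \<psi> w \<in> gen_degrees deg {f. \<pi> f = 0}" by (rule main_step[OF aut'])
      then show "w \<in> \<psi> ` gen_degrees deg {f. \<pi> f = 0}" using fs by (metis imageI)
    qed
  qed
qed

end
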